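(* Let $n_d\ge 1$, let $S_1,\dots,S_{n_d}>0$, $\overline{P_0}\ge 0$ and $\theta_0\in[0,\pi/2)$. For $S>0$ define $\mathcal{X}(S,\overline{P_0},\theta_0)=\{(P,Q)\in\mathbb{R}^2: 0\le P\le S\overline{P_0},\ Q^2\le S^2-P^2,\ |Q|\le\tan(\theta_0)P\}$. Then $$\bigoplus_{i=1}^{n_d}\mathcal{X}(S_i,\overline{P_0},\theta_0)=\mathcal{X}\Big(\sum_{i=1}^{n_d}S_i,\overline{P_0},\theta_0\Big).$$
   Context: $\oplus$ denotes the Minkowski sum $A\oplus B=\{a+b: a\in A, b\in B\}$. The set $\mathcal{X}(S,\overline{P},\theta)$ is the feasible real/reactive power set of a photovoltaic inverter with apparent power rating $S$, normalized available real power $\overline{P}$, and minimum power factor $\cos\theta$. *)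

theory Defs
  imports "HOL-Analysis.Analysis"
begin

definition inverter_set :: "real \<Rightarrow> real \<Rightarrow> real \<Rightarrow> (real \<times> real) set" where
  "inverter_set S Pbar \<theta> = {(P, Q). 0 \<le> P \<and> P \<le> S * Pbar \<and> Q\<^sup>2 \<le> S\<^sup>2 - P\<^sup>2 \<and> \<bar>Q\<bar> \<le> tan \<theta> * P}"

definition minkowski_sum :: "'a::plus set \<Rightarrow> 'a set \<Rightarrow> 'a set" where
  "minkowski_sum A B = {a + b | a b. a \<in> A \<and> b \<in> B}"

fun minkowski_sum_upto :: "(nat \<Rightarrow> 'a::plus set) \<Rightarrow> nat \<Rightarrow> 'a set" where
  "minkowski_sum_upto A 0 = {}"
| "minkowski_sum_upto A (Suc 0) = A 1"
| "minkowski_sum_upto A (Suc (Suc n)) = minkowski_sum (minkowski_sum_upto A (Suc n)) (A (Suc (Suc n)))"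

end

theory Submission
  imports Defs
begin

lemma inv_add:
  assumes a: "a > 0" and b: "b > 0" and "Pbar \<ge> 0" and t: "tan \<theta> \<ge> 0"
  shows "minkowski_sum (inverter_set a Pbar \<theta>) (inverter_set b Pbar \<theta>) = inverter_set (a + b) Pbar \<theta>"
proof
  show "minkowski_sum (inverter_set a Pbar \<theta>) (inverter_set b Pbar \<theta>) \<subseteq> inverter_set (a + b) Pbar \<theta>"
  proof
    fix z assume "z \<in> minkowski_sum (inverter_set a Pbar \<theta>) (inverter_set b Pbar \<theta>)"
    then obtain p1 q1 p2 q2 where z: "z = (p1 + p2, q1 + q2)"
      and h1: "0 \<le> p1" "p1 \<le> a * Pbar" "q1\<^sup>2 \<le> a\<^sup>2 - p1\<^sup>2" "\<bar>q1\<bar> \<le> tan \<theta> * p1"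
      and h2: "0 \<le> p2" "p2 \<le> b * Pbar" "q2\<^sup>2 \<le> b\<^sup>2 - p2\<^sup>2" "\<bar>q2\<bar> \<le> tan \<theta> * p2"
      unfolding minkowski_sum_def inverter_set_def by auto
    have n1: "norm (p1, q1) \<le> a" using h1(3) a unfolding norm_Pair
      by (simp add: real_sqrt_le_iff' real_le_rsqrt)
    have n2: "norm (p2, q2) \<le> b" using h2(3) b unfolding norm_Pair
      by (simp add: real_sqrt_le_iff' real_le_rsqrt)
    have "norm ((p1,q1) + (p2,q2)) \<le> a + b"
      using norm_triangle_ineq[of "(p1,q1)" "(p2,q2)"] n1 n2 by linarith
    hence "sqrt ((p1+p2)\<^sup>2 + (q1+q2)\<^sup>2) \<le> a + b" by (simp add: norm_Pair)
    hence "(sqrt ((p1+p2)\<^sup>2 + (q1+q2)\<^sup>2))\<^sup>2 \<le> (a + b)\<^sup>2"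
      by (rule power_mono) simp
    hence "(p1+p2)\<^sup>2 + (q1+q2)\<^sup>2 \<le> (a + b)\<^sup>2" by simp
    moreover have "\<bar>q1 + q2\<bar> \<le> tan \<theta> * (p1 + p2)"
      using h1(4) h2(4) abs_triangle_ineq[of q1 q2] by (simp add: distrib_left)
    ultimately show "z \<in> inverter_set (a + b) Pbar \<theta>"
      using z h1 h2 unfolding inverter_set_def by (auto simp: distrib_right)
  qed
  show "inverter_set (a + b) Pbar \<theta> \<subseteq> minkowski_sum (inverter_set a Pbar \<theta>) (inverter_set b Pbar \<theta>)"
  proof
    fix z assume "z \<in> inverter_set (a + b) Pbar \<theta>"
    then obtain P Q where z: "z = (P, Q)" and h: "0 \<le> P" "P \<le> (a+b) * Pbar"
      "Q\<^sup>2 \<le> (a+b)\<^sup>2 - P\<^sup>2" "\<bar>Q\<bar> \<le> tan \<theta> * P"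
      unfolding inverter_set_def by auto
    have mem: "(c / (a+b) * P, c / (a+b) * Q) \<in> inverter_set c Pbar \<theta>" if c: "c > 0" for c
    proof -
      define r where "r = c / (a+b)"
      have r: "r > 0" using a b c by (simp add: r_def)
      have rc: "r * (a+b) = c" using a b by (simp add: r_def)
      have "r * P \<le> r * ((a+b) * Pbar)" using h(2) r by simp
      hence 1: "r * P \<le> c * Pbar" using rc by (simp add: mult.assoc[symmetric])
      have "r\<^sup>2 * Q\<^sup>2 \<le> r\<^sup>2 * ((a+b)\<^sup>2 - P\<^sup>2)" using h(3) r by simp
      hence 2: "(r*Q)\<^sup>2 \<le> c\<^sup>2 - (r*P)\<^sup>2" using rc
        by (simp add: right_diff_distrib power_mult_distrib[symmetric])
      have "r * \<bar>Q\<bar> \<le> r * (tan \<theta> * P)" using h(4) r by simp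
      hence 3: "\<bar>r*Q\<bar> \<le> tan \<theta> * (r * P)" using r by (simp add: abs_mult mult_ac)
      show ?thesis using 1 2 3 h(1) r unfolding inverter_set_def r_def[symmetric] by auto
    qed
    have "z = (a / (a+b) * P, a / (a+b) * Q) + (b / (a+b) * P, b / (a+b) * Q)"
    proof -
      have e: "a/(a+b)*X + b/(a+b)*X = X" for X
      proof -
        have "a/(a+b)*X + b/(a+b)*X = (a/(a+b)+b/(a+b))*X" by (simp add: distrib_right)
        also have "\<dots> = X" using a b by (simp add: add_divide_distrib[symmetric])
        finally show ?thesis .
      qed
      show ?thesis using z e[of P] e[of Q] by simp
    qed
    thus "z \<in> minkowski_sum (inverter_set a Pbar \<theta>) (inverter_set b Pbar \<theta>)"
      unfolding minkowski_sum_def using mem[OF a] mem[OF b] by blast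
  qed
qed

theorem corollary1:
  fixes n :: nat and S :: "nat \<Rightarrow> real" and Pbar \<theta> :: real
  assumes "n \<ge> 1"
    and "\<And>i. i \<in> {1..n} \<Longrightarrow> S i > 0"
    and "Pbar \<ge> 0"
    and "0 \<le> \<theta>" and "\<theta> < pi / 2"
  shows "minkowski_sum_upto (\<lambda>i. inverter_set (S i) Pbar \<theta>) n
           = inverter_set (\<Sum>i=1..n. S i) Pbar \<theta>"
proof -
  have t: "tan \<theta> \<ge> 0" using assms(4,5) tan_gt_zero[of \<theta>] by (cases "\<theta> = 0") auto
  have "\<forall>m. Suc m \<le> n \<longrightarrow> minkowski_sum_upto (\<lambda>i. inverter_set (S i) Pbar \<theta>) (Suc m)
           = inverter_set (\<Sum>i=1..Suc m. S i) Pbar \<theta> \<and> (\<Sum>i=1..Suc m. S i) > 0"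
  proof
    fix m show "Suc m \<le> n \<longrightarrow> minkowski_sum_upto (\<lambda>i. inverter_set (S i) Pbar \<theta>) (Suc m)
           = inverter_set (\<Sum>i=1..Suc m. S i) Pbar \<theta> \<and> (\<Sum>i=1..Suc m. S i) > 0"
    proof (induction m)
      case 0 then show ?case using assms(2)[of 1] by auto
    next
      case (Suc m)
      show ?case
      proof
        assume le: "Suc (Suc m) \<le> n"
        with Suc have IH: "minkowski_sum_upto (\<lambda>i. inverter_set (S i) Pbar \<theta>) (Suc m)
           = inverter_set (\<Sum>i=1..Suc m. S i) Pbar \<theta>" "(\<Sum>i=1..Suc m. S i) > 0" by auto
        have pos: "S (Suc (Suc m)) > 0" using assms(2) le by auto
        have "minkowski_sum_upto (\<lambda>i. inverter_set (S i) Pbar \<theta>) (Suc (Suc m))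
           = inverter_set ((\<Sum>i=1..Suc m. S i) + S (Suc (Suc m))) Pbar \<theta>"
          using IH inv_add[OF IH(2) pos assms(3) t] by simp
        moreover have "(\<Sum>i=1..Suc (Suc m). S i) = (\<Sum>i=1..Suc m. S i) + S (Suc (Suc m))"
          by simp
        ultimately show "minkowski_sum_upto (\<lambda>i. inverter_set (S i) Pbar \<theta>) (Suc (Suc m))
           = inverter_set (\<Sum>i=1..Suc (Suc m). S i) Pbar \<theta> \<and> (\<Sum>i=1..Suc (Suc m). S i) > 0"
          using IH(2) pos by simp
      qed
    qed
  qed
  moreover obtain m where "n = Suc m" using assms(1) by (cases n) auto
  ultimately show ?thesis by auto
qed

end
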